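(* Let $\ell_0:\mathbb{R}^d\to\mathbb{R}$ be twice continuously differentiable and let $O\in\mathbb{R}^{d\times k}$ satisfy $O^TO=I_k$. Suppose $\ell_0$ has the $O$-mirror symmetry, i.e. $\ell_0(w)=\ell_0((I-2OO^T)w)$ for all $w\in\mathbb{R}^d$. For $\gamma\ge 0$ let $\ell_\gamma(w)=\ell_0(w)+\gamma\|w\|^2$. Then: 1. For any $\gamma$, if $O^Tw=0$ then $O^T\nabla_w\ell_\gamma(w)=0$. 2. If $OO^Tw=0$, then the Hessian $\nabla_w^2\ell_0(w)$ maps $\ker(O^T)$ into $\ker(O^T)$ and $\operatorname{im}(OO^T)=\ker(O^T)^\perp$ into itself; consequently there is an orthonormal basis of eigenvectors of $\nabla_w^2\ell_0(w)$ a subset of which spans $\ker(O^T)$ and the rest of which spans $\operatorname{im}(OO^T)$. 3. If $O^Tw\neq 0$, there exists $\gamma_0$ such that for all $\gamma>\gamma_0$, $\ell_\gamma((I-OO^T)w)<\ell_\gamma(w)$. 4. Assume in addition that the smallest eigenvalue of $\nabla_w^2\ell_0(w)$ is bounded below by a constant $\lambda_{\min}\in\mathbb{R}$ (possibly negative) uniformly in $w$. Then there exists $\gamma_1$ such that for all $\gamma>\gamma_1$, every minimizer $w$ of $\ell_\gamma$ satisfies $O^Tw=0$.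
   Context: $\ell_0$ plays the role of a per-sample (data-dependent) loss with the data point suppressed; $\gamma$ is the weight decay strength. The matrix $OO^T$ is an orthogonal projection and $I-2OO^T$ is the reflection through the subspace $\ker(O^T)$. *)

theory Defs
  imports "HOL-Analysis.Analysis"
begin

text \<open>Regularised loss: l_gamma(w) = l0(w) + gamma * norm(w)^2.\<close>
definition lgam :: "(real^'d \<Rightarrow> real) \<Rightarrow> real \<Rightarrow> real^'d \<Rightarrow> real" where
  "lgam l0 \<gamma> w = l0 w + \<gamma> * (norm w)^2"

text \<open>Kernel of O^T and image of O O^T (O written Om).\<close>
definition kerOT :: "real^'k^'d \<Rightarrow> (real^'d) set" where
  "kerOT Om = {v. transpose Om *v v = 0}"

definition imOOT :: "real^'k^'d \<Rightarrow> (real^'d) set" where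
  "imOOT Om = range (\<lambda>v. (Om ** transpose Om) *v v)"

end

theory Submission
  imports Defs
begin



lemma linear_mv_left: "linear (\<lambda>A::real^'n^'m. A *v v)"
  by (auto simp: linear_iff matrix_vector_mult_def vec_eq_iff sum.distrib algebra_simps sum_distrib_left)

lemma cont_quad:
  fixes H :: "real^'d \<Rightarrow> real^'d^'d"
  assumes "continuous_on UNIV H"
  shows "isCont (\<lambda>p. (H p *v v) \<bullet> u) x"
proof -
  have "continuous (at x) H" using assms by (simp add: continuous_on_eq_continuous_at)
  then have "continuous (at x) (\<lambda>p. H p *v v)"
    by (rule linear_continuous_compose[OF _ linear_mv_left])
  then show ?thesis by (intro continuous_intros)
qed

lemma line_deriv_f:
  fixes f :: "real^'d \<Rightarrow> real"
  assumes "\<And>w. (f has_derivative (\<lambda>h. g w \<bullet> h)) (at w)"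
  shows "((\<lambda>a. f (y + a *\<^sub>R u)) has_real_derivative (g (y + a *\<^sub>R u) \<bullet> u)) (at a)"
proof -
  have l: "((\<lambda>a. y + a *\<^sub>R u) has_derivative (\<lambda>h. h *\<^sub>R u)) (at a)"
    by (auto intro!: derivative_eq_intros)
  have "((\<lambda>a. f (y + a *\<^sub>R u)) has_derivative (\<lambda>h. g (y + a *\<^sub>R u) \<bullet> (h *\<^sub>R u))) (at a)"
    by (rule has_derivative_compose[OF l assms])
  moreover have "(\<lambda>h. g (y + a *\<^sub>R u) \<bullet> (h *\<^sub>R u)) = (*) (g (y + a *\<^sub>R u) \<bullet> u)"
    by (rule ext) simp
  ultimately show ?thesis unfolding has_field_derivative_def by simp
qed

lemma line_deriv_g:
  fixes g :: "real^'d \<Rightarrow> real^'d"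
  assumes "\<And>w. (g has_derivative (\<lambda>h. H w *v h)) (at w)"
  shows "((\<lambda>a. g (y + a *\<^sub>R v) \<bullet> u) has_real_derivative ((H (y + a *\<^sub>R v) *v v) \<bullet> u)) (at a)"
proof -
  have l: "((\<lambda>a. y + a *\<^sub>R v) has_derivative (\<lambda>h. h *\<^sub>R v)) (at a)"
    by (auto intro!: derivative_eq_intros)
  have "((\<lambda>a. g (y + a *\<^sub>R v)) has_derivative (\<lambda>h. H (y + a *\<^sub>R v) *v (h *\<^sub>R v))) (at a)"
    by (rule has_derivative_compose[OF l assms])
  then have "((\<lambda>a. g (y + a *\<^sub>R v) \<bullet> u) has_derivative (\<lambda>h. (H (y + a *\<^sub>R v) *v (h *\<^sub>R v)) \<bullet> u)) (at a)"
    by (auto intro!: derivative_eq_intros)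
  moreover have "(\<lambda>h. (H (y + a *\<^sub>R v) *v (h *\<^sub>R v)) \<bullet> u) = (*) ((H (y + a *\<^sub>R v) *v v) \<bullet> u)"
    by (rule ext) (simp add: matrix_vector_mult_scaleR)
  ultimately show ?thesis unfolding has_field_derivative_def by simp
qed

lemma mvt_double:
  fixes f :: "real^'d \<Rightarrow> real"
  assumes grad: "\<And>w. (f has_derivative (\<lambda>h. g w \<bullet> h)) (at w)"
    and hess: "\<And>w. (g has_derivative (\<lambda>h. H w *v h)) (at w)"
    and t: "t > 0"
  shows "\<exists>p. norm (p - x) \<le> t * (norm u + norm v) \<and>
    f (x + t *\<^sub>R u + t *\<^sub>R v) - f (x + t *\<^sub>R u) - f (x + t *\<^sub>R v) + f x = t^2 * ((H p *v v) \<bullet> u)"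
proof -
  define \<phi> where "\<phi> a = f ((x + t *\<^sub>R v) + a *\<^sub>R u) - f (x + a *\<^sub>R u)" for a
  have d\<phi>: "(\<phi> has_real_derivative (g ((x + t *\<^sub>R v) + a *\<^sub>R u) \<bullet> u - g (x + a *\<^sub>R u) \<bullet> u)) (at a)" for a
    unfolding \<phi>_def by (intro DERIV_diff line_deriv_f[OF grad])
  obtain \<xi> where \<xi>: "0 < \<xi>" "\<xi> < t"
    "\<phi> t - \<phi> 0 = (t - 0) * (g ((x + t *\<^sub>R v) + \<xi> *\<^sub>R u) \<bullet> u - g (x + \<xi> *\<^sub>R u) \<bullet> u)"
    using MVT2[OF t, of \<phi>, OF d\<phi>] by blast
  define \<psi> where "\<psi> b = g ((x + \<xi> *\<^sub>R u) + b *\<^sub>R v) \<bullet> u" for b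
  have d\<psi>: "(\<psi> has_real_derivative ((H ((x + \<xi> *\<^sub>R u) + b *\<^sub>R v) *v v) \<bullet> u)) (at b)" for b
    unfolding \<psi>_def by (rule line_deriv_g[OF hess])
  obtain \<eta> where \<eta>: "0 < \<eta>" "\<eta> < t"
    "\<psi> t - \<psi> 0 = (t - 0) * ((H ((x + \<xi> *\<^sub>R u) + \<eta> *\<^sub>R v) *v v) \<bullet> u)"
    using MVT2[OF t, of \<psi>, OF d\<psi>] by blast
  define p where "p = (x + \<xi> *\<^sub>R u) + \<eta> *\<^sub>R v"
  have "norm (p - x) \<le> norm (\<xi> *\<^sub>R u) + norm (\<eta> *\<^sub>R v)"
    unfolding p_def using norm_triangle_ineq[of "\<xi> *\<^sub>R u" "\<eta> *\<^sub>R v"] by simp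
  also have "\<dots> = \<xi> * norm u + \<eta> * norm v" using \<xi> \<eta> by simp
  also have "\<dots> \<le> t * norm u + t * norm v"
    using \<xi> \<eta> by (intro add_mono mult_right_mono) auto
  finally have np: "norm (p - x) \<le> t * (norm u + norm v)" by (simp add: algebra_simps)
  have e1: "\<psi> t - \<psi> 0 = g ((x + t *\<^sub>R v) + \<xi> *\<^sub>R u) \<bullet> u - g (x + \<xi> *\<^sub>R u) \<bullet> u"
    unfolding \<psi>_def by (simp add: algebra_simps)
  have "f (x + t *\<^sub>R u + t *\<^sub>R v) - f (x + t *\<^sub>R u) - f (x + t *\<^sub>R v) + f x = \<phi> t - \<phi> 0"
    unfolding \<phi>_def by (simp add: algebra_simps)
  also have "\<dots> = t^2 * ((H p *v v) \<bullet> u)"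
    using \<xi>(3) \<eta>(3) e1 unfolding p_def by (simp add: power2_eq_square)
  finally show ?thesis using np by blast
qed

lemma hess_sym:
  fixes f :: "real^'d \<Rightarrow> real"
  assumes grad: "\<And>w. (f has_derivative (\<lambda>h. g w \<bullet> h)) (at w)"
    and hess: "\<And>w. (g has_derivative (\<lambda>h. H w *v h)) (at w)"
    and hc: "continuous_on UNIV H"
  shows "(H x *v v) \<bullet> u = (H x *v u) \<bullet> v"
proof (rule ccontr)
  define c where "c p = (H p *v v) \<bullet> u" for p
  define c' where "c' p = (H p *v u) \<bullet> v" for p
  assume "(H x *v v) \<bullet> u \<noteq> (H x *v u) \<bullet> v"
  then have a: "\<bar>c x - c' x\<bar> > 0" unfolding c_def c'_def by simp
  define e where "e = \<bar>c x - c' x\<bar> / 2"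
  have e: "e > 0" using a unfolding e_def by simp
  have "isCont c x" unfolding c_def by (rule cont_quad[OF hc])
  then obtain d1 where d1: "d1 > 0" "\<And>p. dist p x < d1 \<Longrightarrow> dist (c p) (c x) < e"
    using e unfolding continuous_at_eps_delta by blast
  have "isCont c' x" unfolding c'_def by (rule cont_quad[OF hc])
  then obtain d2 where d2: "d2 > 0" "\<And>p. dist p x < d2 \<Longrightarrow> dist (c' p) (c' x) < e"
    using e unfolding continuous_at_eps_delta by blast
  define t where "t = min d1 d2 / (2 * (norm u + norm v + 1))"
  have pos: "2 * (norm u + norm v + 1) > (0::real)" by (smt (verit) norm_ge_zero)
  then have t: "t > 0" using d1 d2 unfolding t_def by (intro divide_pos_pos) auto
  have tb: "t * (norm u + norm v) < min d1 d2"
  proof -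
    have "t * (norm u + norm v) \<le> t * (norm u + norm v + 1)" using t by simp
    also have "\<dots> = min d1 d2 / 2" unfolding t_def
      using pos by (simp add: field_simps)
    also have "\<dots> < min d1 d2" using d1(1) d2(1) by (simp add: min_def)
    finally show ?thesis .
  qed
  obtain p where p: "norm (p - x) \<le> t * (norm u + norm v)"
    "f (x + t *\<^sub>R u + t *\<^sub>R v) - f (x + t *\<^sub>R u) - f (x + t *\<^sub>R v) + f x = t^2 * c p"
    using mvt_double[OF grad hess t, of x u v] unfolding c_def by blast
  obtain q where q: "norm (q - x) \<le> t * (norm v + norm u)"
    "f (x + t *\<^sub>R v + t *\<^sub>R u) - f (x + t *\<^sub>R v) - f (x + t *\<^sub>R u) + f x = t^2 * c' q"
    using mvt_double[OF grad hess t, of x v u] unfolding c'_def by blast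
  have "t^2 * c p = t^2 * c' q" using p(2) q(2) by (simp add: algebra_simps)
  then have cpq: "c p = c' q" using t by simp
  have "dist p x < d1" using p(1) tb by (simp add: dist_norm)
  then have h1: "\<bar>c p - c x\<bar> < e" using d1 by (simp add: dist_real_def)
  have "dist q x < d2" using q(1) tb by (simp add: dist_norm add.commute)
  then have h2: "\<bar>c' q - c' x\<bar> < e" using d2 by (simp add: dist_real_def)
  have "\<bar>c x - c' x\<bar> < 2 * e" using h1 h2 cpq by linarith
  then show False unfolding e_def by simp
qed


lemma quad_zero:
  fixes a C :: real
  assumes h: "\<And>s. 2 * s * a \<le> s^2 * C"
  shows "a = 0"
proof (rule ccontr)
  assume a: "a \<noteq> 0"
  define k where "k = \<bar>C\<bar> + 1"
  have k: "k > 0" unfolding k_def by simp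
  have "2 * (a / k) * a \<le> (a / k)^2 * C" by (rule h)
  then have "(2 * (a / k) * a) * k^2 \<le> ((a / k)^2 * C) * k^2" using k by (intro mult_right_mono) auto
  moreover have "(2 * (a / k) * a) * k^2 = (2 * k) * a^2" using k by (simp add: power2_eq_square)
  moreover have "((a / k)^2 * C) * k^2 = C * a^2" using k by (simp add: power2_eq_square)
  ultimately have "(2 * k) * a^2 \<le> C * a^2" by simp
  moreover have "a^2 > 0" using a by simp
  ultimately have "2 * k \<le> C" by simp
  then show False unfolding k_def by simp
qed

definition symm :: "real^'n^'n \<Rightarrow> bool" where
  "symm A \<longleftrightarrow> (\<forall>x y. (A *v x) \<bullet> y = x \<bullet> (A *v y))"

lemma quad_scale: "((A::real^'n^'n) *v (c *\<^sub>R x)) \<bullet> (c *\<^sub>R x) = c^2 * ((A *v x) \<bullet> x)"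
  by (simp add: matrix_vector_mult_scaleR power2_eq_square)

lemma eig_max:
  fixes A :: "real^'n^'n"
  assumes sym: "symm A" and S: "subspace S" and inv: "\<forall>x\<in>S. A *v x \<in> S"
    and x0: "x0 \<in> S" "norm x0 = 1"
    and mx: "\<forall>x\<in>S. norm x = 1 \<longrightarrow> (A *v x) \<bullet> x \<le> (A *v x0) \<bullet> x0"
  shows "A *v x0 = ((A *v x0) \<bullet> x0) *\<^sub>R x0"
proof -
  define \<mu> where "\<mu> = (A *v x0) \<bullet> x0"
  have xx: "x0 \<bullet> x0 = 1" using x0(2) by (simp add: dot_square_norm)
  have key: "(A *v x0) \<bullet> y = 0" if y: "y \<in> S" "y \<bullet> x0 = 0" for y
  proof (rule quad_zero)
    fix s :: real
    define z where "z = x0 + s *\<^sub>R y"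
    have zS: "z \<in> S" unfolding z_def using S x0 y by (simp add: subspace_add subspace_mul)
    have nz: "(norm z)^2 = 1 + s^2 * (y \<bullet> y)"
      unfolding z_def power2_norm_eq_inner using xx y(2)
      by (simp add: inner_add_left inner_add_right inner_commute power2_eq_square)
    have nzp: "norm z > 0"
    proof -
      have "(norm z)^2 > 0" using nz by (simp add: add_pos_nonneg)
      then show ?thesis by (simp add: zero_less_power2)
    qed
    have "(1 / norm z) *\<^sub>R z \<in> S" using zS S by (simp add: subspace_mul)
    moreover have "norm ((1 / norm z) *\<^sub>R z) = 1" using nzp by simp
    ultimately have "(A *v ((1 / norm z) *\<^sub>R z)) \<bullet> ((1 / norm z) *\<^sub>R z) \<le> \<mu>"
      unfolding \<mu>_def using mx by blast
    then have "(1 / norm z)^2 * ((A *v z) \<bullet> z) \<le> \<mu>" by (simp only: quad_scale)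
    then have "(A *v z) \<bullet> z \<le> \<mu> * (norm z)^2" using nzp by (simp add: field_simps)
    moreover have "(A *v z) \<bullet> z = \<mu> + 2 * s * ((A *v x0) \<bullet> y) + s^2 * ((A *v y) \<bullet> y)"
    proof -
      have "(A *v y) \<bullet> x0 = (A *v x0) \<bullet> y" using sym unfolding symm_def by (metis inner_commute)
      then show ?thesis unfolding z_def \<mu>_def
        by (simp add: matrix_vector_right_distrib matrix_vector_mult_scaleR inner_add_left inner_add_right
            power2_eq_square algebra_simps)
    qed
    ultimately show "2 * s * ((A *v x0) \<bullet> y) \<le> s^2 * (\<mu> * (y \<bullet> y) - (A *v y) \<bullet> y)"
      using nz by (simp add: algebra_simps)
  qed
  define z where "z = A *v x0 - \<mu> *\<^sub>R x0"
  have zS: "z \<in> S" unfolding z_def using S x0 inv by (simp add: subspace_diff subspace_mul)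
  have "z \<bullet> x0 = 0" unfolding z_def \<mu>_def using xx by (simp add: inner_diff_left)
  then have "(A *v x0) \<bullet> z = 0" using key zS by simp
  moreover have "x0 \<bullet> z = 0" using \<open>z \<bullet> x0 = 0\<close> by (simp add: inner_commute)
  ultimately have "z \<bullet> z = 0" by (simp add: z_def inner_diff_left)
  then have "z = 0" by simp
  then show ?thesis unfolding z_def \<mu>_def by simp
qed


lemma eig_exists:
  fixes A :: "real^'n^'n"
  assumes sym: "symm A" and S: "subspace S" and inv: "\<forall>x\<in>S. A *v x \<in> S"
    and ne: "S \<noteq> {0}"
  shows "\<exists>x0\<in>S. norm x0 = 1 \<and> A *v x0 = ((A *v x0) \<bullet> x0) *\<^sub>R x0"
proof -
  define K where "K = S \<inter> sphere 0 1"
  have cK: "compact K" unfolding K_def by (intro closed_Int_compact closed_subspace S compact_sphere)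
  obtain x where x: "x \<in> S" "x \<noteq> 0" using ne S subspace_0 by blast
  have "(1 / norm x) *\<^sub>R x \<in> K" unfolding K_def using x S by (simp add: subspace_mul)
  then have neK: "K \<noteq> {}" by blast
  have cq: "continuous_on K (\<lambda>x. (A *v x) \<bullet> x)"
    by (intro continuous_intros continuous_on_compose2[OF matrix_vector_mult_linear_continuous_on]) auto
  obtain x0 where x0: "x0 \<in> K" "\<forall>y\<in>K. (A *v y) \<bullet> y \<le> (A *v x0) \<bullet> x0"
    using continuous_attains_sup[OF cK neK cq] by blast
  have "A *v x0 = ((A *v x0) \<bullet> x0) *\<^sub>R x0"
    using x0 by (intro eig_max[OF sym S inv]) (auto simp: K_def)
  then show ?thesis using x0 by (auto simp: K_def)
qed

lemma spectral_sub:
  fixes A :: "real^'n^'n"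
  assumes sym: "symm A"
  shows "subspace S \<Longrightarrow> \<forall>x\<in>S. A *v x \<in> S \<Longrightarrow>
    \<exists>B. B \<subseteq> S \<and> pairwise orthogonal B \<and> (\<forall>b\<in>B. norm b = 1) \<and> span B = S
        \<and> (\<forall>b\<in>B. \<exists>\<mu>::real. A *v b = \<mu> *\<^sub>R b)"
proof (induction "dim S" arbitrary: S rule: less_induct)
  case less
  show ?case
  proof (cases "S = {0}")
    case True
    then show ?thesis by (intro exI[of _ "{}"]) auto
  next
    case False
    obtain x0 where x0: "x0 \<in> S" "norm x0 = 1" "A *v x0 = ((A *v x0) \<bullet> x0) *\<^sub>R x0"
      using eig_exists[OF sym less.prems False] by blast
    have xx: "x0 \<bullet> x0 = 1" using x0(2) by (simp add: dot_square_norm)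
    define S' where "S' = {y\<in>S. y \<bullet> x0 = 0}"
    have sub': "subspace S'" unfolding S'_def subspace_def using less.prems(1)
      by (auto simp: subspace_def inner_add_left)
    have inv': "\<forall>x\<in>S'. A *v x \<in> S'"
    proof
      fix y assume y: "y \<in> S'"
      have "(A *v y) \<bullet> x0 = y \<bullet> (A *v x0)" using sym unfolding symm_def by blast
      also have "\<dots> = ((A *v x0) \<bullet> x0) * (y \<bullet> x0)" by (subst x0(3)) simp
      also have "\<dots> = 0" using y unfolding S'_def by simp
      finally show "A *v y \<in> S'" using y less.prems(2) unfolding S'_def by auto
    qed
    have "x0 \<notin> S'" unfolding S'_def using xx by auto
    then have "S' \<subset> S" unfolding S'_def using x0(1) by blast
    then have "span S' \<subset> span S" using sub' less.prems(1) by (metis span_eq_iff)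
    then have "dim S' < dim S" by (rule dim_psubset)
    then obtain B' where B': "B' \<subseteq> S'" "pairwise orthogonal B'" "\<forall>b\<in>B'. norm b = 1" "span B' = S'"
        "\<forall>b\<in>B'. \<exists>\<mu>::real. A *v b = \<mu> *\<^sub>R b"
      using less.hyps[OF _ sub' inv'] by blast
    define B where "B = insert x0 B'"
    have x0B': "x0 \<notin> B'" using B'(1) xx unfolding S'_def by auto
    have orth: "orthogonal x0 b \<and> orthogonal b x0" if "b \<in> B'" for b
      using that B'(1) unfolding S'_def orthogonal_def by (auto simp: inner_commute)
    have "pairwise orthogonal B" unfolding B_def using B'(2) orth
      by (auto simp: pairwise_insert)
    moreover have "B \<subseteq> S" unfolding B_def using B'(1) x0(1) unfolding S'_def by auto
    moreover have "span B = S"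
    proof
      show "span B \<subseteq> S" using \<open>B \<subseteq> S\<close> less.prems(1) by (simp add: span_minimal)
      show "S \<subseteq> span B"
      proof
        fix y assume y: "y \<in> S"
        define y' where "y' = y - (y \<bullet> x0) *\<^sub>R x0"
        have "y' \<in> S'" unfolding S'_def y'_def using y xx less.prems(1) x0(1)
          by (simp add: inner_diff_left subspace_diff subspace_mul)
        then have "y' \<in> span B" using B'(4) span_mono[of B' B] unfolding B_def by auto
        moreover have "(y \<bullet> x0) *\<^sub>R x0 \<in> span B" unfolding B_def by (intro span_mul span_base) auto
        ultimately have "y' + (y \<bullet> x0) *\<^sub>R x0 \<in> span B" by (rule span_add)
        then show "y \<in> span B" unfolding y'_def by simp
      qed
    qed
    moreover have "\<forall>b\<in>B. norm b = 1" unfolding B_def using B'(3) x0(2) by auto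
    moreover have "\<forall>b\<in>B. \<exists>\<mu>::real. A *v b = \<mu> *\<^sub>R b" unfolding B_def using B'(5) x0(3) by blast
    ultimately show ?thesis by blast
  qed
qed



lemma P_eq: "(Om ** transpose Om) *v x = Om *v (transpose Om *v x)"
  by (simp add: matrix_vector_mul_assoc)

lemma OtP:
  fixes Om :: "real^'k^'d"
  assumes orth: "transpose Om ** Om = mat 1"
  shows "transpose Om *v ((Om ** transpose Om) *v x) = transpose Om *v x"
  by (simp add: P_eq matrix_vector_mul_assoc orth)

lemma PP:
  fixes Om :: "real^'k^'d"
  assumes orth: "transpose Om ** Om = mat 1"
  shows "(Om ** transpose Om) *v ((Om ** transpose Om) *v x) = (Om ** transpose Om) *v x"
proof -
  have "(Om ** transpose Om) *v ((Om ** transpose Om) *v x) = Om *v (transpose Om *v ((Om ** transpose Om) *v x))" by (rule P_eq)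
  also have "\<dots> = Om *v (transpose Om *v x)" using OtP[OF orth] by simp
  also have "\<dots> = (Om ** transpose Om) *v x" by (rule P_eq[symmetric])
  finally show ?thesis .
qed

lemma P_inner: "(((Om::real^'k^'d) ** transpose Om) *v x) \<bullet> y = (transpose Om *v x) \<bullet> (transpose Om *v y)"
proof -
  have "Om *v (transpose Om *v x) = (transpose Om *v x) v* transpose Om" by (rule vector_transpose_matrix[symmetric])
  then show ?thesis by (simp only: P_eq dot_lmul_matrix)
qed

lemma Psym: "(((Om::real^'k^'d) ** transpose Om) *v x) \<bullet> y = x \<bullet> ((Om ** transpose Om) *v y)"
  using P_inner[of Om x y] P_inner[of Om y x] by (metis inner_commute)

lemma ker_iff:
  fixes Om :: "real^'k^'d"
  assumes orth: "transpose Om ** Om = mat 1"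
  shows "transpose Om *v x = 0 \<longleftrightarrow> (Om ** transpose Om) *v x = 0"
proof
  assume "transpose Om *v x = 0" then show "(Om ** transpose Om) *v x = 0" by (simp add: P_eq)
next
  assume "(Om ** transpose Om) *v x = 0"
  then have "transpose Om *v ((Om ** transpose Om) *v x) = 0" by simp
  then show "transpose Om *v x = 0" using OtP[OF orth] by simp
qed

lemma Rv: "(mat 1 - 2 *\<^sub>R (P::real^'d^'d)) *v x = x - 2 *\<^sub>R (P *v x)"
  by (simp add: matrix_vector_mult_diff_rdistrib scaleR_matrix_vector_assoc[symmetric])

lemma Qv: "(mat 1 - (P::real^'d^'d)) *v x = x - (P *v x)"
  by (simp add: matrix_vector_mult_diff_rdistrib)

lemma Plin: "(P::real^'d^'d) *v (x - c *\<^sub>R y) = P *v x - c *\<^sub>R (P *v y)"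
  by (simp add: matrix_vector_mult_diff_distrib matrix_vector_mult_scaleR)


lemma vec_eq_inner:
  fixes a b :: "'a::real_inner"
  assumes "\<And>h. a \<bullet> h = b \<bullet> h"
  shows "a = b"
proof -
  have "(a - b) \<bullet> (a - b) = 0" using assms[of "a - b"] by (simp add: inner_diff_left)
  then show ?thesis by simp
qed

lemma neg_mv: "(- (A::real^'n^'n)) *v x = - (A *v x)"
  by (simp add: matrix_vector_mult_def vec_eq_iff sum_negf)

lemma quad_lower:
  fixes A :: "real^'n^'n"
  assumes sym: "symm A"
    and ev: "\<forall>v \<mu>. v \<noteq> 0 \<and> A *v v = \<mu> *\<^sub>R v \<longrightarrow> lmin \<le> \<mu>"
  shows "lmin * (v \<bullet> v) \<le> (A *v v) \<bullet> v"
proof -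
  define K :: "(real^'n) set" where "K = sphere 0 1"
  have cK: "compact K" unfolding K_def by simp
  obtain i :: 'n where True by simp
  have "axis i (1::real) \<in> K" unfolding K_def by (simp add: norm_axis_1)
  then have neK: "K \<noteq> {}" by blast
  have cq: "continuous_on K (\<lambda>x. (A *v x) \<bullet> x)"
    by (intro continuous_intros continuous_on_compose2[OF matrix_vector_mult_linear_continuous_on]) auto
  obtain x0 where x0: "x0 \<in> K" "\<forall>y\<in>K. (A *v x0) \<bullet> x0 \<le> (A *v y) \<bullet> y"
    using continuous_attains_inf[OF cK neK cq] by blast
  have symn: "symm (- A)" using sym unfolding symm_def by (simp add: neg_mv)
  have "(- A) *v x0 = (((- A) *v x0) \<bullet> x0) *\<^sub>R x0"
    using x0 by (intro eig_max[OF symn subspace_UNIV]) (auto simp: K_def neg_mv)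
  then have eq: "A *v x0 = ((A *v x0) \<bullet> x0) *\<^sub>R x0" by (simp add: neg_mv)
  have "x0 \<noteq> 0" using x0(1) unfolding K_def by auto
  then have lm: "lmin \<le> (A *v x0) \<bullet> x0" using ev eq by blast
  show ?thesis
  proof (cases "v = 0")
    case True then show ?thesis by simp
  next
    case False
    define v' where "v' = (1 / norm v) *\<^sub>R v"
    have "v' \<in> K" unfolding K_def v'_def using False by simp
    then have "(A *v x0) \<bullet> x0 \<le> (A *v v') \<bullet> v'" using x0 by blast
    also have "\<dots> = (1 / norm v)^2 * ((A *v v) \<bullet> v)" unfolding v'_def by (rule quad_scale)
    finally have "(A *v x0) \<bullet> x0 * (norm v)^2 \<le> (A *v v) \<bullet> v"
      using False by (simp add: field_simps)
    moreover have "lmin * (norm v)^2 \<le> (A *v x0) \<bullet> x0 * (norm v)^2"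
      using lm by (simp add: mult_right_mono)
    ultimately show ?thesis by (simp add: power2_norm_eq_inner)
  qed
qed



theorem theorem1:
  fixes l0 :: "real^'d \<Rightarrow> real"
    and g :: "real^'d \<Rightarrow> real^'d"
    and H :: "real^'d \<Rightarrow> real^'d^'d"
    and Om :: "real^'k^'d"
  assumes grad: "\<And>w. (l0 has_derivative (\<lambda>h. g w \<bullet> h)) (at w)"
    and hess: "\<And>w. (g has_derivative (\<lambda>h. H w *v h)) (at w)"
    and hess_cont: "continuous_on UNIV H"
    and orth: "transpose Om ** Om = mat 1"
    and mirror: "\<And>w. l0 w = l0 ((mat 1 - 2 *\<^sub>R (Om ** transpose Om)) *v w)"
  shows
    "(\<forall>\<gamma> w G. transpose Om *v w = 0 \<longrightarrow>
        (lgam l0 \<gamma> has_derivative (\<lambda>h. G \<bullet> h)) (at w) \<longrightarrow>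
        transpose Om *v G = 0)
   \<and> (\<forall>w. (Om ** transpose Om) *v w = 0 \<longrightarrow>
        (\<forall>v\<in>kerOT Om. H w *v v \<in> kerOT Om)
      \<and> (\<forall>v\<in>imOOT Om. H w *v v \<in> imOOT Om)
      \<and> (\<exists>B B1. pairwise orthogonal B \<and> (\<forall>b\<in>B. norm b = 1) \<and> span B = UNIV
            \<and> (\<forall>b\<in>B. \<exists>\<mu>::real. H w *v b = \<mu> *\<^sub>R b)
            \<and> B1 \<subseteq> B \<and> span B1 = kerOT Om \<and> span (B - B1) = imOOT Om))
   \<and> (\<forall>w. transpose Om *v w \<noteq> 0 \<longrightarrow>
        (\<exists>\<gamma>0. \<forall>\<gamma>>\<gamma>0.
           lgam l0 \<gamma> ((mat 1 - Om ** transpose Om) *v w) < lgam l0 \<gamma> w))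
   \<and> ((\<exists>lmin::real. \<forall>w v \<mu>. v \<noteq> 0 \<and> H w *v v = \<mu> *\<^sub>R v \<longrightarrow> lmin \<le> \<mu>) \<longrightarrow>
        (\<exists>\<gamma>1. \<forall>\<gamma>>\<gamma>1. \<forall>w. (\<forall>u. lgam l0 \<gamma> w \<le> lgam l0 \<gamma> u) \<longrightarrow> transpose Om *v w = 0))"
proof -
  define P where "P = Om ** transpose Om"
  define R where "R = mat 1 - 2 *\<^sub>R P"
  have Pd: "Om ** transpose Om = P" unfolding P_def ..
  have Rv: "R *v x = x - 2 *\<^sub>R (P *v x)" for x unfolding R_def by (rule Rv)
  have PP: "P *v (P *v x) = P *v x" for x unfolding P_def by (rule PP[OF orth])
  have Psym: "(P *v x) \<bullet> y = x \<bullet> (P *v y)" for x y unfolding P_def by (rule Psym)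
  have OtP: "transpose Om *v (P *v x) = transpose Om *v x" for x unfolding P_def by (rule OtP[OF orth])
  have ker: "transpose Om *v x = 0 \<longleftrightarrow> P *v x = 0" for x unfolding P_def by (rule ker_iff[OF orth])
  have Plin: "P *v (x - c *\<^sub>R y) = P *v x - c *\<^sub>R (P *v y)" for x y c by (rule Plin)
  have PR: "P *v (R *v x) = - (P *v x)" for x
  proof -
    have "P *v (R *v x) = P *v (x - 2 *\<^sub>R (P *v x))" by (simp only: Rv)
    also have "\<dots> = P *v x - 2 *\<^sub>R (P *v (P *v x))" by (rule Plin)
    also have "\<dots> = P *v x - 2 *\<^sub>R (P *v x)" by (simp only: PP)
    also have "\<dots> = - (P *v x)" by (simp only: scaleR_2) simp
    finally show ?thesis .
  qed
  have RR: "R *v (R *v x) = x" for x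
  proof -
    have "R *v (R *v x) = R *v x - 2 *\<^sub>R (P *v (R *v x))" by (rule Rv)
    also have "\<dots> = (x - 2 *\<^sub>R (P *v x)) + 2 *\<^sub>R (P *v x)" by (simp only: PR scaleR_minus_right diff_minus_eq_add, simp only: Rv)
    also have "\<dots> = x" by simp
    finally show ?thesis .
  qed
  have Rsym: "(R *v x) \<bullet> y = x \<bullet> (R *v y)" for x y
    by (simp add: Rv inner_diff_left inner_diff_right Psym)
  have mirrorR: "l0 x = l0 (R *v x)" for x using mirror unfolding R_def P_def .
  have blR: "bounded_linear (\<lambda>x. R *v x)" using matrix_vector_mul_linear linear_conv_bounded_linear by blast
  have symmH: "symm (H w)" for w
    unfolding symm_def
  proof (intro allI)
    fix x y
    have "(H w *v x) \<bullet> y = (H w *v y) \<bullet> x" by (rule hess_sym[OF grad hess hess_cont])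
    then show "(H w *v x) \<bullet> y = x \<bullet> (H w *v y)" by (simp only: inner_commute[of x])
  qed
  have gR: "g w = R *v g (R *v w)" for w
  proof -
    have d1: "((\<lambda>w. l0 (R *v w)) has_derivative (\<lambda>h. g (R *v w) \<bullet> (R *v h))) (at w)"
      by (rule has_derivative_compose[OF bounded_linear_imp_has_derivative[OF blR] grad])
    have "(\<lambda>w. l0 (R *v w)) = l0" by (rule ext) (rule mirrorR[symmetric])
    then have d2: "(l0 has_derivative (\<lambda>h. g (R *v w) \<bullet> (R *v h))) (at w)" using d1 by simp
    have eq: "(\<lambda>h. g w \<bullet> h) = (\<lambda>h. g (R *v w) \<bullet> (R *v h))"
      by (rule has_derivative_unique[OF grad[of w] d2])
    have "g w \<bullet> h = (R *v g (R *v w)) \<bullet> h" for h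
      using fun_cong[OF eq, of h] Rsym[of "g (R *v w)" h] by simp
    then show ?thesis by (rule vec_eq_inner)
  qed
  have HR: "H w *v h = R *v (H (R *v w) *v (R *v h))" for w h
  proof -
    have d0: "((\<lambda>w. g (R *v w)) has_derivative (\<lambda>h. H (R *v w) *v (R *v h))) (at w)"
      by (rule has_derivative_compose[OF bounded_linear_imp_has_derivative[OF blR] hess])
    have d1: "((\<lambda>w. R *v g (R *v w)) has_derivative (\<lambda>h. R *v (H (R *v w) *v (R *v h)))) (at w)"
      by (rule has_derivative_compose[OF d0 bounded_linear_imp_has_derivative[OF blR]])
    have "(\<lambda>w. R *v g (R *v w)) = g" by (rule ext) (rule gR[symmetric])
    then have d2: "(g has_derivative (\<lambda>h. R *v (H (R *v w) *v (R *v h)))) (at w)" using d1 by simp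
    have eq: "(\<lambda>h. H w *v h) = (\<lambda>h. R *v (H (R *v w) *v (R *v h)))"
      by (rule has_derivative_unique[OF hess[of w] d2])
    show ?thesis using fun_cong[OF eq, of h] by simp
  qed
  have part1: "\<forall>\<gamma> w G. transpose Om *v w = 0 \<longrightarrow>
        (lgam l0 \<gamma> has_derivative (\<lambda>h. G \<bullet> h)) (at w) \<longrightarrow>
        transpose Om *v G = 0"
  proof (intro allI impI)
    fix \<gamma> w G
    assume w0: "transpose Om *v w = 0" and dG: "(lgam l0 \<gamma> has_derivative (\<lambda>h. G \<bullet> h)) (at w)"
    have e: "lgam l0 \<gamma> = (\<lambda>x. l0 x + \<gamma> * (x \<bullet> x))"
      by (rule ext) (simp add: lgam_def power2_norm_eq_inner)
    have "((\<lambda>x. l0 x + \<gamma> * (x \<bullet> x)) has_derivative (\<lambda>h. g w \<bullet> h + \<gamma> * (h \<bullet> w + w \<bullet> h))) (at w)"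
    proof (intro derivative_intros grad)
      show "((\<lambda>x. x \<bullet> x) has_derivative (\<lambda>x. x \<bullet> w + w \<bullet> x)) (at w)"
        by (rule has_derivative_eq_rhs, rule has_derivative_inner[OF has_derivative_ident has_derivative_ident]) (auto simp: inner_commute)
    qed
    moreover have "(\<lambda>h. g w \<bullet> h + \<gamma> * (h \<bullet> w + w \<bullet> h)) = (\<lambda>h. (g w + (2*\<gamma>) *\<^sub>R w) \<bullet> h)"
      by (rule ext) (simp add: inner_add_left inner_commute algebra_simps)
    ultimately have dl: "(lgam l0 \<gamma> has_derivative (\<lambda>h. (g w + (2*\<gamma>) *\<^sub>R w) \<bullet> h)) (at w)"
      unfolding e by simp
    have eq: "(\<lambda>h. G \<bullet> h) = (\<lambda>h. (g w + (2*\<gamma>) *\<^sub>R w) \<bullet> h)"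
      by (rule has_derivative_unique[OF dG dl])
    have G: "G = g w + (2*\<gamma>) *\<^sub>R w"
      by (rule vec_eq_inner) (rule fun_cong[OF eq])
    have Pw: "P *v w = 0" using w0 ker by simp
    have Rw: "R *v w = w" by (simp add: Rv Pw)
    have "g w = R *v g (R *v w)" by (rule gR)
    then have "g w = R *v g w" by (simp only: Rw)
    then have "g w = g w - 2 *\<^sub>R (P *v g w)" by (simp only: Rv)
    then have "P *v g w = 0" by simp
    then have gw0: "transpose Om *v g w = 0" using ker by simp
    show "transpose Om *v G = 0"
      by (simp only: G matrix_vector_right_distrib matrix_vector_mult_scaleR w0 gw0) simp
  qed
  have kerP: "v \<in> kerOT Om \<longleftrightarrow> P *v v = 0" for v unfolding kerOT_def using ker by simp
  have subK: "subspace (kerOT Om)"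
  proof -
    have "kerOT Om = {v. P *v v = 0}" using kerP by blast
    then show ?thesis unfolding subspace_def
      by (simp add: matrix_vector_right_distrib matrix_vector_mult_scaleR)
  qed
  have subI: "subspace (range (\<lambda>v. P *v v))"
    using linear_subspace_image[OF matrix_vector_mul_linear[of P] subspace_UNIV] by simp
  have part2: "\<forall>w. P *v w = 0 \<longrightarrow>
        (\<forall>v\<in>kerOT Om. H w *v v \<in> kerOT Om)
      \<and> (\<forall>v\<in>range (\<lambda>v. P *v v). H w *v v \<in> range (\<lambda>v. P *v v))
      \<and> (\<exists>B B1. pairwise orthogonal B \<and> (\<forall>b\<in>B. norm b = 1) \<and> span B = UNIV
            \<and> (\<forall>b\<in>B. \<exists>\<mu>::real. H w *v b = \<mu> *\<^sub>R b)
            \<and> B1 \<subseteq> B \<and> span B1 = kerOT Om \<and> span (B - B1) = range (\<lambda>v. P *v v))"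
  proof (intro allI impI)
    fix w assume Pw: "P *v w = 0"
    have Rw: "R *v w = w" by (simp add: Rv Pw)
    have Hlin: "H w *v (x - c *\<^sub>R y) = H w *v x - c *\<^sub>R (H w *v y)" for x y c
      by (simp only: matrix_vector_mult_diff_distrib matrix_vector_mult_scaleR)
    have HP: "H w *v (P *v h) = P *v (H w *v h)" for h
    proof -
      have "H w *v (R *v h) = R *v (H (R *v w) *v (R *v (R *v h)))" by (rule HR)
      also have "\<dots> = R *v (H w *v h)" by (simp only: Rw RR)
      finally have "H w *v (h - 2 *\<^sub>R (P *v h)) = H w *v h - 2 *\<^sub>R (P *v (H w *v h))" by (simp only: Rv)
      then have "H w *v h - 2 *\<^sub>R (H w *v (P *v h)) = H w *v h - 2 *\<^sub>R (P *v (H w *v h))" by (simp only: Hlin)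
      then show ?thesis by simp
    qed
    have invK: "\<forall>v\<in>kerOT Om. H w *v v \<in> kerOT Om"
    proof
      fix v assume "v \<in> kerOT Om"
      then have "P *v v = 0" using kerP by simp
      then have "P *v (H w *v v) = 0" using HP[of v] by simp
      then show "H w *v v \<in> kerOT Om" using kerP by simp
    qed
    have invI: "\<forall>v\<in>range (\<lambda>v. P *v v). H w *v v \<in> range (\<lambda>v. P *v v)"
    proof
      fix v assume "v \<in> range (\<lambda>v. P *v v)"
      then obtain u where "v = P *v u" by blast
      then have "H w *v v = P *v (H w *v u)" using HP by simp
      then show "H w *v v \<in> range (\<lambda>v. P *v v)" by blast
    qed
    obtain B1 where B1: "B1 \<subseteq> kerOT Om" "pairwise orthogonal B1" "\<forall>b\<in>B1. norm b = 1" "span B1 = kerOT Om"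
        "\<forall>b\<in>B1. \<exists>\<mu>::real. H w *v b = \<mu> *\<^sub>R b"
      using spectral_sub[OF symmH subK invK] by blast
    obtain B2 where B2: "B2 \<subseteq> range (\<lambda>v. P *v v)" "pairwise orthogonal B2" "\<forall>b\<in>B2. norm b = 1"
        "span B2 = range (\<lambda>v. P *v v)" "\<forall>b\<in>B2. \<exists>\<mu>::real. H w *v b = \<mu> *\<^sub>R b"
      using spectral_sub[OF symmH subI invI] by blast
    have orth12: "orthogonal b1 b2 \<and> orthogonal b2 b1" if h1: "b1 \<in> B1" and h2: "b2 \<in> B2" for b1 b2
    proof -
      obtain u where u: "b2 = P *v u" using h2 B2(1) by blast
      have "P *v b1 = 0" using h1 B1(1) kerP by blast
      then have "b1 \<bullet> b2 = 0" unfolding u using Psym[of b1 u] by simp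
      then show ?thesis unfolding orthogonal_def by (simp add: inner_commute)
    qed
    have disj: "B1 \<inter> B2 = {}"
    proof (rule ccontr)
      assume "B1 \<inter> B2 \<noteq> {}"
      then obtain b where b: "b \<in> B1" "b \<in> B2" by blast
      then have "orthogonal b b" using orth12 by blast
      then have "b = 0" unfolding orthogonal_def by simp
      then show False using b B1(3) by auto
    qed
    define B where "B = B1 \<union> B2"
    have "pairwise orthogonal B" unfolding B_def pairwise_def
      using B1(2) B2(2) orth12 unfolding pairwise_def by blast
    moreover have "\<forall>b\<in>B. norm b = 1" unfolding B_def using B1(3) B2(3) by blast
    moreover have "\<forall>b\<in>B. \<exists>\<mu>::real. H w *v b = \<mu> *\<^sub>R b" unfolding B_def using B1(5) B2(5) by blast
    moreover have "B - B1 = B2" unfolding B_def using disj by blast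
    moreover have "span B = UNIV"
    proof -
      have "x \<in> span B" for x
      proof -
        have "P *v (x - P *v x) = 0" by (simp only: matrix_vector_mult_diff_distrib PP) simp
        then have "x - P *v x \<in> span B1" using B1(4) kerP by simp
        then have a: "x - P *v x \<in> span B" unfolding B_def using span_mono[of B1 "B1 \<union> B2"] by blast
        have "P *v x \<in> span B2" using B2(4) by simp
        then have b: "P *v x \<in> span B" unfolding B_def using span_mono[of B2 "B1 \<union> B2"] by blast
        have "(x - P *v x) + P *v x \<in> span B" by (rule span_add[OF a b])
        then show ?thesis by simp
      qed
      then show ?thesis by blast
    qed
    ultimately have "\<exists>B B1. pairwise orthogonal B \<and> (\<forall>b\<in>B. norm b = 1) \<and> span B = UNIV
            \<and> (\<forall>b\<in>B. \<exists>\<mu>::real. H w *v b = \<mu> *\<^sub>R b)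
            \<and> B1 \<subseteq> B \<and> span B1 = kerOT Om \<and> span (B - B1) = range (\<lambda>v. P *v v)"
      using B1(4) B2(4) unfolding B_def by (intro exI[of _ "B1 \<union> B2"] exI[of _ B1]) auto
    then show "(\<forall>v\<in>kerOT Om. H w *v v \<in> kerOT Om)
      \<and> (\<forall>v\<in>range (\<lambda>v. P *v v). H w *v v \<in> range (\<lambda>v. P *v v))
      \<and> (\<exists>B B1. pairwise orthogonal B \<and> (\<forall>b\<in>B. norm b = 1) \<and> span B = UNIV
            \<and> (\<forall>b\<in>B. \<exists>\<mu>::real. H w *v b = \<mu> *\<^sub>R b)
            \<and> B1 \<subseteq> B \<and> span B1 = kerOT Om \<and> span (B - B1) = range (\<lambda>v. P *v v))"
      using invK invI by blast
  qed
  have part3: "\<forall>w. transpose Om *v w \<noteq> 0 \<longrightarrow>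
        (\<exists>\<gamma>0. \<forall>\<gamma>>\<gamma>0.
           lgam l0 \<gamma> ((mat 1 - P) *v w) < lgam l0 \<gamma> w)"
  proof (intro allI impI)
    fix w assume w: "transpose Om *v w \<noteq> 0"
    define p where "p = P *v w"
    define u where "u = w - p"
    have pne: "p \<noteq> 0" using w ker p_def by simp
    have Qw: "(mat 1 - P) *v w = u" unfolding u_def p_def by (rule Qv)
    have up: "u \<bullet> p = 0"
    proof -
      have "p \<bullet> p = w \<bullet> p" unfolding p_def using Psym[of w "P *v w"] PP[of w] by simp
      then show ?thesis unfolding u_def by (simp add: inner_diff_left)
    qed
    have wup: "w = u + p" unfolding u_def by simp
    have nw: "(norm w)^2 = (norm u)^2 + p \<bullet> p"
      unfolding wup power2_norm_eq_inner using up
      by (simp add: inner_add_left inner_add_right inner_commute)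
    have pp: "p \<bullet> p > 0" using pne by simp
    show "\<exists>\<gamma>0. \<forall>\<gamma>>\<gamma>0. lgam l0 \<gamma> ((mat 1 - P) *v w) < lgam l0 \<gamma> w"
    proof (intro exI allI impI)
      fix \<gamma> assume "\<gamma> > (l0 u - l0 w) / (p \<bullet> p)"
      then have "l0 u - l0 w < \<gamma> * (p \<bullet> p)" using pp by (simp add: pos_divide_less_eq)
      then show "lgam l0 \<gamma> ((mat 1 - P) *v w) < lgam l0 \<gamma> w"
        unfolding Qw lgam_def nw by (simp add: algebra_simps)
    qed
  qed
  have part4: "(\<exists>lmin::real. \<forall>w v \<mu>. v \<noteq> 0 \<and> H w *v v = \<mu> *\<^sub>R v \<longrightarrow> lmin \<le> \<mu>) \<longrightarrow>
        (\<exists>\<gamma>1. \<forall>\<gamma>>\<gamma>1. \<forall>w. (\<forall>u. lgam l0 \<gamma> w \<le> lgam l0 \<gamma> u) \<longrightarrow> transpose Om *v w = 0)"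
  proof
    assume "\<exists>lmin::real. \<forall>w v \<mu>. v \<noteq> 0 \<and> H w *v v = \<mu> *\<^sub>R v \<longrightarrow> lmin \<le> \<mu>"
    then obtain lmin :: real where lm: "\<forall>w v \<mu>. v \<noteq> 0 \<and> H w *v v = \<mu> *\<^sub>R v \<longrightarrow> lmin \<le> \<mu>" by blast
    have qb: "lmin * (v \<bullet> v) \<le> (H x *v v) \<bullet> v" for x v
    proof (rule quad_lower[OF symmH])
      show "\<forall>v \<mu>. v \<noteq> 0 \<and> H x *v v = \<mu> *\<^sub>R v \<longrightarrow> lmin \<le> \<mu>" using lm by blast
    qed
    show "\<exists>\<gamma>1. \<forall>\<gamma>>\<gamma>1. \<forall>w. (\<forall>u. lgam l0 \<gamma> w \<le> lgam l0 \<gamma> u) \<longrightarrow> transpose Om *v w = 0"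
    proof (intro exI allI impI)
      fix \<gamma> w assume \<gamma>: "\<gamma> > - lmin / 2" and mn: "\<forall>u. lgam l0 \<gamma> w \<le> lgam l0 \<gamma> u"
      show "transpose Om *v w = 0"
      proof (rule ccontr)
        assume w: "transpose Om *v w \<noteq> 0"
        define p where "p = P *v w"
        define u where "u = w - p"
        have pne: "p \<noteq> 0" using w ker p_def by simp
        have up: "u \<bullet> p = 0"
        proof -
          have "p \<bullet> p = w \<bullet> p" unfolding p_def using Psym[of w "P *v w"] PP[of w] by simp
          then show ?thesis unfolding u_def by (simp add: inner_diff_left)
        qed
        have wup: "w = u + p" unfolding u_def by simp
        have nw: "(norm w)^2 = (norm u)^2 + p \<bullet> p"
          unfolding wup power2_norm_eq_inner using up
          by (simp add: inner_add_left inner_add_right inner_commute)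
        have pp: "p \<bullet> p > 0" using pne by simp
        define k where "k t = l0 (u + t *\<^sub>R p) + \<gamma> * t^2 * (p \<bullet> p)" for t
        define k' where "k' t = g (u + t *\<^sub>R p) \<bullet> p + 2 * \<gamma> * t * (p \<bullet> p)" for t
        define k'' where "k'' t = (H (u + t *\<^sub>R p) *v p) \<bullet> p + 2 * \<gamma> * (p \<bullet> p)" for t
        have sq: "((\<lambda>t. \<gamma> * t^2 * (p \<bullet> p)) has_real_derivative 2 * \<gamma> * t * (p \<bullet> p)) (at t)" for t
          by (auto intro!: derivative_eq_intros)
        have dk: "(k has_real_derivative k' t) (at t)" for t
          unfolding k_def k'_def by (rule DERIV_add[OF line_deriv_f[OF grad] sq])
        have lin: "((\<lambda>t. 2 * \<gamma> * t * (p \<bullet> p)) has_real_derivative 2 * \<gamma> * (p \<bullet> p)) (at t)" for t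
          by (auto intro!: derivative_eq_intros)
        have dk': "(k' has_real_derivative k'' t) (at t)" for t
          unfolding k'_def k''_def by (rule DERIV_add[OF line_deriv_g[OF hess] lin])
        have k1: "k 1 = l0 w + \<gamma> * (p \<bullet> p)" unfolding k_def wup by simp
        have "u + (-1) *\<^sub>R p = R *v w" unfolding Rv wup p_def[symmetric]
          using wup p_def by (simp add: scaleR_2 algebra_simps)
        then have km1: "k (-1) = l0 w + \<gamma> * (p \<bullet> p)" unfolding k_def using mirrorR[of w] by simp
        have k0: "k 0 = l0 u" unfolding k_def by simp
        have "lgam l0 \<gamma> w \<le> lgam l0 \<gamma> u" using mn by blast
        then have le: "k 1 \<le> k 0" unfolding k1 k0 lgam_def nw by (simp add: algebra_simps)
        have k''pos: "k'' t > 0" for t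
        proof -
          have "lmin * (p \<bullet> p) \<le> (H (u + t *\<^sub>R p) *v p) \<bullet> p" by (rule qb)
          moreover have "(lmin + 2 * \<gamma>) * (p \<bullet> p) > 0" using \<gamma> pp by simp
          ultimately show ?thesis unfolding k''_def by (simp add: algebra_simps)
        qed
        obtain \<xi>1 where \<xi>1: "0 < \<xi>1" "\<xi>1 < 1" "k 1 - k 0 = (1 - 0) * k' \<xi>1"
          using MVT2[of 0 1 k k'] dk by auto
        obtain \<xi>2 where \<xi>2: "-1 < \<xi>2" "\<xi>2 < 0" "k 0 - k (-1) = (0 - -1) * k' \<xi>2"
          using MVT2[of "-1" 0 k k'] dk by auto
        have "\<xi>2 < \<xi>1" using \<xi>1 \<xi>2 by simp
        then obtain \<zeta> where \<zeta>: "k' \<xi>1 - k' \<xi>2 = (\<xi>1 - \<xi>2) * k'' \<zeta>"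
          using MVT2[of \<xi>2 \<xi>1 k' k''] dk' by auto
        have "(\<xi>1 - \<xi>2) * k'' \<zeta> > 0" using \<open>\<xi>2 < \<xi>1\<close> k''pos[of \<zeta>] by simp
        then have "k' \<xi>1 > k' \<xi>2" using \<zeta> by simp
        then show False using \<xi>1(3) \<xi>2(3) k1 km1 le by simp
      qed
    qed
  qed
  show ?thesis unfolding Pd imOOT_def using part1 part2 part3 part4 by blast
qed


end
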